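(* Let $M$ be a pointed metric space and assume that $\mu_0\in B_{\mathcal F(M)}$ is not an extreme point of $B_{\mathcal F(M)}$. Then there is a separable subset $N\subset M$ containing the origin $0$ such that $\mu_0\in\mathcal F(N)$ and $\mu_0$ is not an extreme point of $B_{\mathcal F(N)}$.
   Context: A pointed metric space $M$ has a distinguished origin $0$. $\mathrm{Lip}_0(M)$ is the Banach space of real Lipschitz functions on $M$ vanishing at $0$ with the best Lipschitz constant as norm; $\delta(x)$ is evaluation at $x$, and the Lipschitz free space $\mathcal F(M)$ is the closed linear span of $\delta(M)$ in $\mathrm{Lip}_0(M)^*$. For $0\in N\subset M$, $\mathcal F(N)$ is identified (isometrically, via the canonical inclusion) with the closed linear span of $\{\delta(x):x\in N\}$ in $\mathcal F(M)$. *)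

theory Defs
  imports "HOL-Analysis.Analysis"
begin

text \<open>Lip_0(M): real functions Lipschitz on M vanishing at z0 (only values on M matter).
  Elements of Lip_0(M)^* are represented as functionals on functions, required to be
  zero outside Lip_0(M) so that equality of functionals is equality on Lip_0(M).\<close>

definition lip0 :: "'a::metric_space set \<Rightarrow> 'a \<Rightarrow> ('a \<Rightarrow> real) set" where
  "lip0 M z0 = {f. (\<exists>C. lipschitz_on C M f) \<and> f z0 = 0}"

definition lipball :: "'a::metric_space set \<Rightarrow> 'a \<Rightarrow> ('a \<Rightarrow> real) set" where
  "lipball M z0 = {f. lipschitz_on 1 M f \<and> f z0 = 0}"

definition mol_span :: "'a::metric_space set \<Rightarrow> 'a \<Rightarrow> 'a set \<Rightarrow> (('a \<Rightarrow> real) \<Rightarrow> real) set" where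
  "mol_span M z0 N = {\<nu>. \<exists>S c. finite S \<and> S \<subseteq> N \<and>
      \<nu> = (\<lambda>f. if f \<in> lip0 M z0 then (\<Sum>x\<in>S. c x * f x) else 0)}"

text \<open>F(N) as the closed linear span of delta(N) in Lip_0(M)^* (dual norm), for N \<subseteq> M.
  Closure is expressed as: a linear functional on Lip_0(M) approximable in dual norm.\<close>
definition free_space :: "'a::metric_space set \<Rightarrow> 'a \<Rightarrow> 'a set \<Rightarrow> (('a \<Rightarrow> real) \<Rightarrow> real) set" where
  "free_space M z0 N = {\<mu>.
      (\<forall>f. f \<notin> lip0 M z0 \<longrightarrow> \<mu> f = 0) \<and>
      (\<forall>f\<in>lip0 M z0. \<forall>g\<in>lip0 M z0. \<mu> (\<lambda>x. f x + g x) = \<mu> f + \<mu> g) \<and>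
      (\<forall>a. \<forall>f\<in>lip0 M z0. \<mu> (\<lambda>x. a * f x) = a * \<mu> f) \<and>
      (\<forall>\<epsilon>>0. \<exists>\<nu>\<in>mol_span M z0 N. \<forall>f\<in>lipball M z0. \<bar>\<mu> f - \<nu> f\<bar> \<le> \<epsilon>)}"

definition free_ball :: "'a::metric_space set \<Rightarrow> 'a \<Rightarrow> 'a set \<Rightarrow> (('a \<Rightarrow> real) \<Rightarrow> real) set" where
  "free_ball M z0 N = {\<mu> \<in> free_space M z0 N. \<forall>f\<in>lipball M z0. \<bar>\<mu> f\<bar> \<le> 1}"

definition is_extreme_point :: "(('a \<Rightarrow> real) \<Rightarrow> real) set \<Rightarrow> (('a \<Rightarrow> real) \<Rightarrow> real) \<Rightarrow> bool" where
  "is_extreme_point B \<mu> \<longleftrightarrow> \<mu> \<in> B \<and>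
     \<not> (\<exists>\<mu>1\<in>B. \<exists>\<mu>2\<in>B. \<mu>1 \<noteq> \<mu>2 \<and> \<mu> = (\<lambda>f. (\<mu>1 f + \<mu>2 f) / 2))"

definition separable_set :: "'a::metric_space set \<Rightarrow> bool" where
  "separable_set N \<longleftrightarrow> (\<exists>D. countable D \<and> D \<subseteq> N \<and> N \<subseteq> closure D)"

end

theory Submission
  imports Defs
begin

lemma free_space_approxD:
  assumes "\<mu> \<in> free_space M z0 N" "\<epsilon> > 0"
  shows "\<exists>\<nu>\<in>mol_span M z0 N. \<forall>f\<in>lipball M z0. \<bar>\<mu> f - \<nu> f\<bar> \<le> \<epsilon>"
  using assms unfolding free_space_def by simp

lemma free_space_I:
  assumes "\<mu> \<in> free_space M z0 N'"
    and "\<And>\<epsilon>. \<epsilon> > 0 \<Longrightarrow> \<exists>\<nu>\<in>mol_span M z0 N. \<forall>f\<in>lipball M z0. \<bar>\<mu> f - \<nu> f\<bar> \<le> \<epsilon>"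
  shows "\<mu> \<in> free_space M z0 N"
  using assms unfolding free_space_def by simp

lemma mol_span_mono:
  assumes "N \<subseteq> N'" "\<nu> \<in> mol_span M z0 N"
  shows "\<nu> \<in> mol_span M z0 N'"
proof -
  from assms(2) obtain S c where "finite S" "S \<subseteq> N"
    "\<nu> = (\<lambda>f. if f \<in> lip0 M z0 then (\<Sum>x\<in>S. c x * f x) else 0)"
    unfolding mol_span_def by blast
  then show ?thesis unfolding mol_span_def using assms(1) by blast
qed

lemma free_space_mono:
  assumes "N \<subseteq> N'" "\<mu> \<in> free_space M z0 N"
  shows "\<mu> \<in> free_space M z0 N'"
proof (rule free_space_I[OF assms(2)])
  fix \<epsilon> :: real assume "\<epsilon> > 0"
  then obtain \<nu> where "\<nu> \<in> mol_span M z0 N" "\<forall>f\<in>lipball M z0. \<bar>\<mu> f - \<nu> f\<bar> \<le> \<epsilon>"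
    using free_space_approxD[OF assms(2)] by blast
  then show "\<exists>\<nu>\<in>mol_span M z0 N'. \<forall>f\<in>lipball M z0. \<bar>\<mu> f - \<nu> f\<bar> \<le> \<epsilon>"
    using mol_span_mono[OF assms(1)] by blast
qed

lemma free_space_countable:
  assumes "\<mu> \<in> free_space M z0 M"
  shows "\<exists>N. countable N \<and> N \<subseteq> M \<and> \<mu> \<in> free_space M z0 N"
proof -
  have "\<forall>n::nat. \<exists>\<nu>. \<nu> \<in> mol_span M z0 M \<and> (\<forall>f\<in>lipball M z0. \<bar>\<mu> f - \<nu> f\<bar> \<le> inverse (real (Suc n)))"
  proof
    fix n :: nat
    have "inverse (real (Suc n)) > 0" by simp
    then show "\<exists>\<nu>. \<nu> \<in> mol_span M z0 M \<and> (\<forall>f\<in>lipball M z0. \<bar>\<mu> f - \<nu> f\<bar> \<le> inverse (real (Suc n)))"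
      using free_space_approxD[OF assms] by blast
  qed
  then obtain V where V: "\<And>n. V n \<in> mol_span M z0 M"
    "\<And>n. \<forall>f\<in>lipball M z0. \<bar>\<mu> f - V n f\<bar> \<le> inverse (real (Suc n))"
    by (rule choice[THEN exE]) blast
  have "\<forall>n. \<exists>S. finite S \<and> S \<subseteq> M \<and> V n \<in> mol_span M z0 S"
  proof
    fix n
    from V(1)[of n] obtain S c where "finite S" "S \<subseteq> M"
      "V n = (\<lambda>f. if f \<in> lip0 M z0 then (\<Sum>x\<in>S. c x * f x) else 0)"
      unfolding mol_span_def by blast
    moreover have "V n \<in> mol_span M z0 S"
      unfolding mol_span_def using calculation by blast
    ultimately show "\<exists>S. finite S \<and> S \<subseteq> M \<and> V n \<in> mol_span M z0 S" by blast
  qed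
  then obtain S where S: "\<And>n. finite (S n)" "\<And>n. S n \<subseteq> M" "\<And>n. V n \<in> mol_span M z0 (S n)"
    by (rule choice[THEN exE]) blast
  define N where "N = (\<Union>n. S n)"
  have "countable N" unfolding N_def using S(1) by (simp add: countable_finite)
  moreover have "N \<subseteq> M" unfolding N_def using S(2) by blast
  moreover have "\<mu> \<in> free_space M z0 N"
  proof (rule free_space_I[OF assms])
    fix \<epsilon> :: real assume "\<epsilon> > 0"
    then obtain n where n: "inverse (real (Suc n)) < \<epsilon>" using reals_Archimedean by blast
    have "V n \<in> mol_span M z0 N"
      by (rule mol_span_mono[OF _ S(3)[of n]]) (auto simp: N_def)
    moreover have "\<forall>f\<in>lipball M z0. \<bar>\<mu> f - V n f\<bar> \<le> \<epsilon>"
    proof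
      fix f assume "f \<in> lipball M z0"
      then have "\<bar>\<mu> f - V n f\<bar> \<le> inverse (real (Suc n))" using V(2)[of n] by blast
      then show "\<bar>\<mu> f - V n f\<bar> \<le> \<epsilon>" using n by linarith
    qed
    ultimately show "\<exists>\<nu>\<in>mol_span M z0 N. \<forall>f\<in>lipball M z0. \<bar>\<mu> f - \<nu> f\<bar> \<le> \<epsilon>" by blast
  qed
  ultimately show ?thesis by blast
qed

lemma free_ball_mono:
  assumes "N \<subseteq> N'" "\<mu> \<in> free_ball M z0 N"
  shows "\<mu> \<in> free_ball M z0 N'"
  using assms free_space_mono unfolding free_ball_def by blast

theorem lemma5p2:
  fixes M :: "'a::metric_space set" and z0 :: 'a and \<mu>0 :: "('a \<Rightarrow> real) \<Rightarrow> real"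
  assumes "z0 \<in> M"
    and "\<mu>0 \<in> free_ball M z0 M"
    and "\<not> is_extreme_point (free_ball M z0 M) \<mu>0"
  shows "\<exists>N. N \<subseteq> M \<and> z0 \<in> N \<and> separable_set N \<and> \<mu>0 \<in> free_space M z0 N \<and>
           \<not> is_extreme_point (free_ball M z0 N) \<mu>0"
proof -
  obtain \<mu>1 \<mu>2 where m: "\<mu>1 \<in> free_ball M z0 M" "\<mu>2 \<in> free_ball M z0 M" "\<mu>1 \<noteq> \<mu>2"
    "\<mu>0 = (\<lambda>f. (\<mu>1 f + \<mu>2 f) / 2)"
    using assms(2,3) unfolding is_extreme_point_def by blast
  have fb: "\<mu> \<in> free_space M z0 M" if "\<mu> \<in> free_ball M z0 M" for \<mu>
    using that unfolding free_ball_def by simp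
  obtain N0 where N0: "countable N0" "N0 \<subseteq> M" "\<mu>0 \<in> free_space M z0 N0"
    using free_space_countable[OF fb[OF assms(2)]] by blast
  obtain N1 where N1: "countable N1" "N1 \<subseteq> M" "\<mu>1 \<in> free_space M z0 N1"
    using free_space_countable[OF fb[OF m(1)]] by blast
  obtain N2 where N2: "countable N2" "N2 \<subseteq> M" "\<mu>2 \<in> free_space M z0 N2"
    using free_space_countable[OF fb[OF m(2)]] by blast
  define N where "N = insert z0 (N0 \<union> N1 \<union> N2)"
  have cN: "countable N" unfolding N_def using N0(1) N1(1) N2(1) by simp
  have sep: "separable_set N" unfolding separable_set_def
    using cN closure_subset by blast
  have f0: "\<mu>0 \<in> free_space M z0 N" by (rule free_space_mono[OF _ N0(3)]) (auto simp: N_def)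
  have f1: "\<mu>1 \<in> free_space M z0 N" by (rule free_space_mono[OF _ N1(3)]) (auto simp: N_def)
  have f2: "\<mu>2 \<in> free_space M z0 N" by (rule free_space_mono[OF _ N2(3)]) (auto simp: N_def)
  have g1: "\<mu>1 \<in> free_ball M z0 N" using f1 m(1) unfolding free_ball_def by simp
  have g2: "\<mu>2 \<in> free_ball M z0 N" using f2 m(2) unfolding free_ball_def by simp
  have "\<not> is_extreme_point (free_ball M z0 N) \<mu>0"
    unfolding is_extreme_point_def using g1 g2 m(3,4) by blast
  moreover have "N \<subseteq> M" unfolding N_def using N0(2) N1(2) N2(2) assms(1) by blast
  moreover have "z0 \<in> N" unfolding N_def by simp
  ultimately show ?thesis using sep f0 by blast
qed

end
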